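(* Let $m$ be a positive integer, and write $m = 2^{\nu_2(m)} m_1$ with $m_1$ odd. If $m_1 \equiv 1 \pmod 4$, then $S_2(m)$ is empty.
   Context: For a positive integer $x$, $\nu_2(x)$ denotes the largest integer $e$ such that $2^e$ divides $x$. For a positive integer $m$, consider positive rational solutions $(x,y)$ of $x^y = y^{mx}$ with $x \neq 1$. For such a solution, $r = \log y / \log x$ is a positive rational number (so $y = x^r$); write $r = a/b$ with $a,b$ positive coprime integers. For an integer $k \ge 1$, $S_k(m)$ denotes the set of such solutions $(x,y)$ for which $|a-b| = k$. *)

theory Defs
  imports Complex_Main "HOL-Computational_Algebra.Primes"
begin

definition nu2 :: "nat \<Rightarrow> nat" where
  "nu2 x = multiplicity (2::nat) x"

definition S :: "nat \<Rightarrow> nat \<Rightarrow> (rat \<times> rat) set" where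
  "S k m = {(x, y). x > 0 \<and> y > 0 \<and> x \<noteq> 1 \<and>
     (real_of_rat x) powr (real_of_rat y) = (real_of_rat y) powr (real m * real_of_rat x) \<and>
     (\<exists>a b :: nat. a > 0 \<and> b > 0 \<and> coprime a b \<and>
        ln (real_of_rat y) / ln (real_of_rat x) = real a / real b \<and>
        \<bar>int a - int b\<bar> = int k)}"

end

theory Submission
  imports Defs
begin

lemma no_sq: "(c::nat) mod 4 = 3 \<Longrightarrow> 2^e * c \<noteq> n^2"
proof (induction e arbitrary: n rule: less_induct)
  case (less e)
  show ?case
  proof
    assume h: "2^e * c = n^2"
    have codd: "odd c" using less.prems by presburger
    show False
    proof (cases "e = 0")
      case True
      then have "c = n^2" using h by simp
      then have "odd n" using codd by auto
      then obtain k where "n = 2*k+1" using oddE by blast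
      then have "n^2 = 4*(k^2+k) + 1" by (simp add: power2_eq_square algebra_simps)
      then show False using \<open>c = n^2\<close> less.prems by presburger
    next
      case False
      have "even (2^e * c)" using False by simp
      then have "even (n^2)" using h by simp
      then have "even n" by simp
      then obtain k where k: "n = 2*k" by blast
      show False
      proof (cases "e = 1")
        case True
        then have "2*c = 4*k^2" using h k by (simp add: power2_eq_square)
        then show False using codd by presburger
      next
        case False
        define e' where "e' = e - 2"
        have e': "e = Suc (Suc e')" using False \<open>e \<noteq> 0\<close> unfolding e'_def by simp
        then have "4 * (2^e' * c) = 4 * k^2" using h k by (simp add: power2_eq_square algebra_simps)
        then have "2^e' * c = k^2" by simp
        then show False using less.IH[of e' k] less.prems e' by simp
      qed
    qed
  qed
qed

lemma int_sq:
  assumes "(t::rat)^2 = of_nat N"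
  shows "\<exists>n::nat. N = n^2"
proof -
  obtain p q where pq: "quotient_of t = (p, q)" by (cases "quotient_of t") auto
  have tq: "t = of_int p / of_int q" using quotient_of_div[OF pq] .
  have qpos: "q > 0" using quotient_of_denom_pos[OF pq] .
  have cop: "coprime p q" using quotient_of_coprime[OF pq] .
  have "(of_int p / of_int q)^2 = (of_nat N :: rat)" using assms tq by simp
  then have "(of_int (p^2) :: rat) = of_int (int N * q^2)" using qpos
    by (simp add: power_divide field_simps)
  then have e: "p^2 = int N * q^2" by (simp only: of_int_eq_iff)
  then have "q^2 dvd p^2" by simp
  moreover have cop2: "coprime (q^2) (p^2)" using cop by (simp add: coprime_commute)
  ultimately have "is_unit (q^2)" using coprime_common_divisor[OF cop2 dvd_refl] by blast
  then have "q^2 = 1" by simp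
  then have "q = 1" using qpos by (simp add: power2_eq_1_iff)
  then have "int N = p^2" using e by simp
  then have "int N = int ((nat \<bar>p\<bar>)^2)" by simp
  then have "N = (nat \<bar>p\<bar>)^2" by (simp only: of_nat_eq_iff)
  then show ?thesis by blast
qed



lemma odd_ab:
  assumes "coprime (a::nat) b" "\<bar>int a - int b\<bar> = 2"
  shows "odd a \<and> odd b \<and> (a*b) mod 4 = 3"
proof -
  have ab: "a = b + 2 \<or> b = a + 2" using assms(2) by linarith
  have "odd b"
  proof
    assume "even b"
    then have "even a" using ab by auto
    then show False using assms(1) \<open>even b\<close> by (metis coprime_common_divisor even_numeral odd_one)
  qed
  then have "odd a" using ab by auto
  obtain j where j: "b = 2*j+1" using \<open>odd b\<close> oddE by blast
  obtain i where i: "a = 2*i+1" using \<open>odd a\<close> oddE by blast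
  have "(a*b) mod 4 = 3"
    using ab
  proof
    assume "a = b + 2"
    then have "a*b = 4*(j*j+2*j) + 3" using j by (simp add: algebra_simps)
    then show ?thesis by presburger
  next
    assume "b = a + 2"
    then have "a*b = 4*(i*i+2*i) + 3" using i by (simp add: algebra_simps)
    then show ?thesis by presburger
  qed
  then show ?thesis using \<open>odd a\<close> \<open>odd b\<close> by simp
qed

theorem lemma5:
  fixes m :: nat
  assumes "m > 0"
    and "(m div 2 ^ nu2 m) mod 4 = 1"
  shows "S 2 m = {}"
proof (rule ccontr)
  assume "S 2 m \<noteq> {}"
  then obtain x y a b where x0: "x > 0" and y0: "y > 0" and x1: "x \<noteq> 1"
    and eq: "(real_of_rat x) powr (real_of_rat y) = (real_of_rat y) powr (real m * real_of_rat x)"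
    and a0: "a > 0" and b0: "(b::nat) > 0" and cop: "coprime a b"
    and r: "ln (real_of_rat y) / ln (real_of_rat x) = real a / real b"
    and d: "\<bar>int a - int b\<bar> = 2"
    unfolding S_def by auto
  define X where "X = real_of_rat x"
  define Y where "Y = real_of_rat y"
  have X0: "X > 0" using x0 unfolding X_def by simp
  have Y0: "Y > 0" using y0 unfolding Y_def by simp
  have X1: "X \<noteq> 1" using x1 unfolding X_def by simp
  have lnX: "ln X \<noteq> 0" using X0 X1 by simp
  have hY: "ln Y = real a / real b * ln X" using r lnX unfolding X_def Y_def by (simp add: field_simps)
  have e1: "Y * ln X = real m * X * ln Y" using eq X0 Y0 unfolding X_def[symmetric] Y_def[symmetric]
    by (metis ln_powr)
  have "Y * ln X = (real m * X * real a / real b) * ln X" using e1 hY by simp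
  then have Yeq: "Y = real m * X * real a / real b" using lnX by (metis mult_cancel_right)
  have "ln (Y ^ b) = ln (X ^ a)" using hY b0 X0 Y0 by (simp add: ln_realpow field_simps)
  then have YX: "Y ^ b = X ^ a" using X0 Y0 by simp
  define q :: rat where "q = of_nat m * of_nat a / of_nat b"
  have q0: "q \<noteq> 0" using assms(1) a0 b0 unfolding q_def by simp
  have "real_of_rat (q * x) = Y" using Yeq b0 unfolding q_def X_def
    by (simp add: of_rat_mult of_rat_divide)
  then have "real_of_rat ((q*x)^b) = real_of_rat (x^a)" using YX unfolding X_def by (simp add: of_rat_power)
  then have qx: "(q*x)^b = x^a" by (simp only: of_rat_eq_iff)
  have oab: "odd a \<and> odd b \<and> (a*b) mod 4 = 3" using odd_ab[OF cop d] .
  have ab: "a = b + 2 \<or> b = a + 2" using d by linarith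
  obtain w where w: "q^b = w^2"
    using ab
  proof
    assume "a = b + 2"
    then have "q^b * x^b = x^2 * x^b" using qx by (simp add: power_mult_distrib power_add power2_eq_square)
    then have "q^b = x^2" using x0 by (simp add: power2_eq_square)
    then show ?thesis using that by blast
  next
    assume "b = a + 2"
    then have "q^b * x^2 * x^a = 1 * x^a" using qx by (simp add: power_mult_distrib power_add power2_eq_square algebra_simps)
    then have "q^b * x^2 = 1" using x0 by simp
    then have "q^b = (1/x)^2" using x0 by (simp add: field_simps)
    then show ?thesis using that by blast
  qed
  obtain j where j: "b = 2*j+1" using oab oddE by blast
  have "q^b = q * (q^j)^2" using j by (simp add: power_add power_mult[symmetric] mult.commute)
  then have "q = (w / q^j)^2" using w q0 by (simp add: power_divide field_simps)
  then obtain s where s: "q = s^2" by blast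
  have "(of_nat b * s)^2 = (of_nat (m*a*b) :: rat)" using s b0 unfolding q_def
    by (simp add: power_mult_distrib field_simps power2_eq_square)
  then obtain n where n: "m*a*b = n^2" using int_sq by blast
  define e where "e = nu2 m"
  define m1 where "m1 = m div 2^e"
  have "2^e dvd m" unfolding e_def nu2_def by (rule multiplicity_dvd)
  then have mm: "m = 2^e * m1" unfolding m1_def by simp
  have m14: "m1 mod 4 = 1" using assms(2) unfolding m1_def e_def .
  have "(m1*(a*b)) mod 4 = ((m1 mod 4)*((a*b) mod 4)) mod 4" by (simp add: mod_mult_eq)
  then have "(m1*(a*b)) mod 4 = 3" using m14 oab by simp
  moreover have "2^e * (m1*(a*b)) = n^2" using n mm by (simp add: mult.assoc)
  ultimately show False using no_sq by blast
qed

end
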